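(* For every $\kappa>1$ there exist $\rho\ge 1+\ln\kappa$ and a non-decreasing, concave, differentiable function $v:[0,1]\to\mathbb{R}_{\ge0}$ with $v(1)=1$ and $v'(0)/v(1)=\kappa$ such that for every price $p>0$ and every $z\in\arg\max_{z'\in[0,1]}(v(z')-pz')$, one has $p\,z\le 1/\rho$. Consequently, for a single agent whose valuation is $v$ with probability $1$, every linear pricing obtains revenue at most a $1/\rho$ fraction of the revenue $v(1)=1$ obtained by the non-linear pricing that charges $v(z)$ for fraction $z$.
   Context: Linear pricing at price $p$ per unit charges $pz$ for a fraction $z$ of a divisible item; a buyer with valuation $v$ buys a fraction maximizing $v(z)-pz$ over $z\in[0,1]$, and the seller's revenue is $p$ times that fraction. The curvature of $v$ is $v'(0)/v(1)$. *)

theory Defs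
  imports "HOL-Analysis.Analysis"
begin

definition demand :: "(real \<Rightarrow> real) \<Rightarrow> real \<Rightarrow> real set" where
  "demand v p = {z \<in> {0..1}. \<forall>z'\<in>{0..1}. v z' - p * z' \<le> v z - p * z}"

definition linear_revenue :: "real \<Rightarrow> real \<Rightarrow> real" where
  "linear_revenue p z = p * z"

end

theory Submission
  imports Defs
begin

lemma glue:
  fixes f1 f2 :: "real \<Rightarrow> real"
  assumes d1: "(f1 has_real_derivative D) (at a)" and d2: "(f2 has_real_derivative D) (at a)"
    and eq: "f1 a = f2 a"
  shows "((\<lambda>z. if z \<le> a then f1 z else f2 z) has_real_derivative D) (at a)"
proof -
  let ?g = "\<lambda>z. if z \<le> a then f1 z else f2 z"
  have q1: "((\<lambda>y. (f1 y - f1 a) / (y - a)) \<longlongrightarrow> D) (at a)"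
    using d1 by (simp add: has_field_derivative_iff)
  have q2: "((\<lambda>y. (f2 y - f2 a) / (y - a)) \<longlongrightarrow> D) (at a)"
    using d2 by (simp add: has_field_derivative_iff)
  have l: "((\<lambda>y. (?g y - ?g a) / (y - a)) \<longlongrightarrow> D) (at_left a)"
  proof -
    have "((\<lambda>y. (f1 y - f1 a) / (y - a)) \<longlongrightarrow> D) (at_left a)"
      using q1 by (rule tendsto_mono[OF at_le[OF subset_UNIV]])
    moreover have "eventually (\<lambda>y. (f1 y - f1 a) / (y - a) = (?g y - ?g a) / (y - a)) (at_left a)"
      by (simp add: eventually_at_filter)
    ultimately show ?thesis by (rule Lim_transform_eventually)
  qed
  have r: "((\<lambda>y. (?g y - ?g a) / (y - a)) \<longlongrightarrow> D) (at_right a)"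
  proof -
    have "((\<lambda>y. (f2 y - f2 a) / (y - a)) \<longlongrightarrow> D) (at_right a)"
      using q2 by (rule tendsto_mono[OF at_le[OF subset_UNIV]])
    moreover have "eventually (\<lambda>y. (f2 y - f2 a) / (y - a) = (?g y - ?g a) / (y - a)) (at_right a)"
      using eq by (simp add: eventually_at_filter)
    ultimately show ?thesis by (rule Lim_transform_eventually)
  qed
  have "((\<lambda>y. (?g y - ?g a) / (y - a)) \<longlongrightarrow> D) (at a)"
    using l r by (subst at_eq_sup_left_right) (rule filterlim_sup)
  then show ?thesis by (simp add: has_field_derivative_iff)
qed


lemma neg_ln_le: "0 < (x::real) \<Longrightarrow> - ln x \<le> 1 / x - 1"
  using ln_le_minus_one[of "1/x"] by (simp add: ln_div)

lemma exists_a: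
  fixes \<kappa> :: real assumes k: "\<kappa> > 1"
  shows "\<exists>a. 0 < a \<and> a \<le> 1 \<and> a * (1 - ln a) = 1 / \<kappa>"
proof -
  define t where "t = 1 / (2 * \<kappa>)"
  define e where "e = t^2"
  have t0: "0 < t" "t < 1" using k by (auto simp: t_def divide_simps)
  have e0: "0 < e" "e \<le> 1" using t0 by (auto simp: e_def power_le_one)
  have lne: "ln e = 2 * ln t" unfolding e_def using ln_realpow[of t 2] by simp
  have "- ln t \<le> 1 / t - 1" using neg_ln_le t0 by simp
  then have m: "t^2 * (- ln t) \<le> t^2 * (1 / t - 1)" by (rule mult_left_mono) simp
  have ee: "e * (1 - ln e) = t^2 + 2 * (t^2 * (- ln t))" unfolding lne by (simp add: e_def algebra_simps)
  have tt: "t^2 * (1 / t - 1) = t - t^2" using t0 by (simp add: power2_eq_square algebra_simps)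
  have kt: "1 / \<kappa> = 2 * t" by (simp add: t_def)
  have "e * (1 - ln e) \<le> 2 * t - t^2" using ee m tt by linarith
  also have "\<dots> \<le> 1 / \<kappa>" using kt by simp
  finally have ge: "e * (1 - ln e) \<le> 1 / \<kappa>" .
  have le: "1 / \<kappa> \<le> 1 * (1 - ln 1)" using k by simp
  have cont: "continuous_on {e..1} (\<lambda>a. a * (1 - ln a))"
    using e0 by (intro continuous_intros) auto
  obtain a where "e \<le> a" "a \<le> 1" "a * (1 - ln a) = 1 / \<kappa>"
    using IVT'[OF ge le e0(2) cont] by blast
  then show ?thesis using e0 by (intro exI[of _ a]) auto
qed

theorem mainTheorem12:
  fixes \<kappa> :: real
  assumes "\<kappa> > 1"
  shows "\<exists>\<rho> v. \<rho> \<ge> 1 + ln \<kappa>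
     \<and> mono_on {0..1} v
     \<and> concave_on {0..1} v
     \<and> (\<forall>x\<in>{0..1}. v differentiable (at x within {0..1}))
     \<and> (\<forall>x\<in>{0..1}. v x \<ge> 0)
     \<and> v 1 = 1
     \<and> (\<exists>D. (v has_real_derivative D) (at 0 within {0..1}) \<and> D / v 1 = \<kappa>)
     \<and> (\<forall>p>0. \<forall>z\<in>demand v p. linear_revenue p z \<le> 1 / \<rho>)"
proof -
  obtain a where a0: "0 < a" and a1: "a \<le> 1" and ak: "a * (1 - ln a) = 1 / \<kappa>"
    using exists_a[OF assms] by blast
  define W where "W = 1 - ln a"
  have W1: "W \<ge> 1" using a0 a1 by (simp add: W_def)
  have aW: "a * W = 1 / \<kappa>" using ak by (simp add: W_def)
  have kap: "\<kappa> = 1 / (a * W)" unfolding aW by simp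
  define v where "v = (\<lambda>z. if z \<le> a then z / (a * W) else (1 + ln z - ln a) / W)"
  define D where "D = (\<lambda>z::real. if z \<le> a then 1 / (a * W) else 1 / (z * W))"
  have deriv: "(v has_real_derivative D x) (at x)" if "x > 0" for x
  proof -
    consider "x < a" | "x = a" | "x > a" by linarith
    then show ?thesis
    proof cases
      case 1
      have "((\<lambda>z. z / (a * W)) has_real_derivative 1 / (a * W)) (at x)"
        using a0 W1 by (auto intro!: derivative_eq_intros)
      then have "(v has_real_derivative 1 / (a * W)) (at x)"
        by (rule has_field_derivative_transform_within_open[where S="{..<a}"])
           (use 1 in \<open>auto simp: v_def\<close>)
      then show ?thesis using 1 by (simp add: D_def)
    next
      case 3
      have "((\<lambda>z. (1 + ln z - ln a) / W) has_real_derivative 1 / (x * W)) (at x)"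
        using that W1 by (auto intro!: derivative_eq_intros)
      then have "(v has_real_derivative 1 / (x * W)) (at x)"
        by (rule has_field_derivative_transform_within_open[where S="{a<..}"])
           (use 3 in \<open>auto simp: v_def\<close>)
      then show ?thesis using 3 by (simp add: D_def)
    next
      case 2
      have d1: "((\<lambda>z. z / (a * W)) has_real_derivative 1 / (a * W)) (at a)"
        using a0 W1 by (auto intro!: derivative_eq_intros)
      have d2: "((\<lambda>z. (1 + ln z - ln a) / W) has_real_derivative 1 / (a * W)) (at a)"
        using a0 W1 by (auto intro!: derivative_eq_intros)
      have "(v has_real_derivative 1 / (a * W)) (at a)"
        unfolding v_def by (rule glue[OF d1 d2]) (use a0 W1 in simp)
      then show ?thesis using 2 by (simp add: D_def)
    qed
  qed
  have deriv0: "(v has_real_derivative 1 / (a * W)) (at 0)"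
  proof -
    have "((\<lambda>z. z / (a * W)) has_real_derivative 1 / (a * W)) (at 0)"
      using a0 W1 by (auto intro!: derivative_eq_intros)
    then show ?thesis
      by (rule has_field_derivative_transform_within_open[where S="{..<a}"])
         (use a0 in \<open>auto simp: v_def\<close>)
  qed
  have derivall: "(v has_real_derivative D x) (at x)" if "x \<in> {0..1}" for x
    using that deriv deriv0 a0 by (cases "x = 0") (auto simp: D_def)
  have lna: "ln a \<le> 0" using a0 a1 by simp
  have v1: "v 1 = 1"
  proof (cases "a = 1")
    case True then show ?thesis by (simp add: v_def W_def)
  next
    case False
    then have "v 1 = (1 - ln a) / W" using a1 by (simp add: v_def)
    also have "\<dots> = 1" using W1 by (simp add: W_def)
    finally show ?thesis .
  qed
  have vge: "v y = (1 + ln y - ln a) / W" if "y \<ge> a" for y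
    using that a0 by (cases "y = a") (auto simp: v_def)
  have mono: "mono_on {0..1} v"
  proof (rule mono_onI)
    fix x y :: real assume xy: "x \<in> {0..1}" "y \<in> {0..1}" "x \<le> y"
    show "v x \<le> v y"
    proof (cases "y \<le> a")
      case True then show ?thesis using xy a0 W1
        by (simp add: v_def divide_right_mono)
    next
      case False
      show ?thesis
      proof (cases "x \<le> a")
        case True
        have "x / (a * W) \<le> 1 / W" using True a0 W1 by (simp add: field_simps)
        also have "\<dots> \<le> (1 + ln y - ln a) / W" using False a0 W1
          by (intro divide_right_mono) auto
        finally show ?thesis using True False by (simp add: v_def)
      next
        case F2: False
        then show ?thesis using False xy a0 W1
          by (auto simp: v_def intro!: divide_right_mono)
      qed
    qed
  qed
  have conc: "concave_on {0..1} v"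
    unfolding concave_on_def
  proof (rule convex_on_realI[where f'="\<lambda>x. - D x"])
    show "connected {0..1::real}" by simp
    show "((\<lambda>x. - v x) has_real_derivative - D x) (at x)" if "x \<in> {0..1}" for x
      using derivall[OF that] by (auto intro!: derivative_eq_intros)
    show "- D x \<le> - D y" if "x \<in> {0..1}" "y \<in> {0..1}" "x \<le> y" for x y
      using that a0 W1
      by (auto simp: D_def field_simps intro: mult_right_mono)
  qed
  have diff: "\<forall>x\<in>{0..1}. v differentiable (at x within {0..1})"
    using derivall by (meson has_field_derivative_at_within real_differentiable_def)
  have nonneg: "\<forall>x\<in>{0..1}. v x \<ge> 0"
  proof
    fix x :: real assume x: "x \<in> {0..1}"
    have "v 0 \<le> v x" using mono_onD[OF mono, of 0 x] x by auto
    moreover have "v 0 = 0" using a0 by (simp add: v_def)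
    ultimately show "v x \<ge> 0" by simp
  qed
  have rev: "linear_revenue p z \<le> 1 / W" if p: "p > 0" and z: "z \<in> demand v p" for p z
  proof -
    have z01: "z \<in> {0..1}" and opt: "\<And>z'. z' \<in> {0..1} \<Longrightarrow> v z' - p * z' \<le> v z - p * z"
      using z by (auto simp: demand_def)
    show ?thesis
    proof (cases "z \<le> a")
      case True
      have "v 0 - p * 0 \<le> v z - p * z" using opt[of 0] by simp
      then have "p * z \<le> z / (a * W)" using True a0 by (simp add: v_def)
      also have "\<dots> \<le> 1 / W" using True a0 W1 by (simp add: field_simps)
      finally show ?thesis by (simp add: linear_revenue_def)
    next
      case False
      show ?thesis
      proof (rule ccontr)
        assume nt: "\<not> ?thesis"
        define q where "q = p * z * W"
        have q1: "q > 1" using nt W1 by (simp add: q_def linear_revenue_def field_simps)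
        define s where "s = max (a / z) ((1 + 1 / q) / 2)"
        have s1: "s < 1" using False a0 q1 by (auto simp: s_def field_simps)
        have sa: "s \<ge> a / z" by (simp add: s_def)
        have sq: "s \<ge> (1 + 1 / q) / 2" by (simp add: s_def)
        have s0: "s > 0" using sa a0 False by (smt (verit) divide_pos_pos)
        have sza: "s * z \<ge> a" using sa False a0 by (simp add: field_simps)
        have "v (s * z) - p * (s * z) \<le> v z - p * z"
        proof (rule opt)
          have "s * z \<le> 1" using s0 s1 z01 mult_le_one[of s z] by auto
          then show "s * z \<in> {0..1}" using s0 z01 by auto
        qed
        then have "(1 + ln (s * z) - ln a) / W - p * (s * z) \<le> (1 + ln z - ln a) / W - p * z"
          using vge[OF sza] vge[of z] False by simp
        moreover have "(1 + ln (s * z) - ln a) / W = (1 + ln z - ln a) / W + ln s / W"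
          using s0 False a0 by (simp add: ln_mult add_divide_distrib[symmetric])
        ultimately have "ln s / W \<le> p * (s * z) - p * z" by linarith
        then have "ln s \<le> W * (p * (s * z) - p * z)" using W1 by (simp add: divide_le_eq mult.commute)
        moreover have "W * (p * (s * z) - p * z) = - (p * z * (1 - s) * W)" by (simp add: algebra_simps)
        ultimately have "p * z * (1 - s) * W \<le> - ln s" by linarith
        also have "\<dots> \<le> 1 / s - 1" using neg_ln_le s0 by simp
        finally have A: "p * z * (1 - s) * W \<le> 1 / s - 1" .
        have B: "1 / s - 1 = (1 / s) * (1 - s)" using s0 by (simp add: field_simps)
        have C: "q * (1 - s) = p * z * (1 - s) * W" by (simp add: q_def algebra_simps)
        have "q * (1 - s) \<le> (1 / s) * (1 - s)" using A B C by linarith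
        then have "q \<le> 1 / s" using s1 mult_le_cancel_right_pos[of "1 - s" q "1 / s"] by linarith
        then have "q * s \<le> (1 / s) * s" using s0 mult_right_mono[of q "1/s" s] by linarith
        then have Q1: "q * s \<le> 1" using s0 by simp
        have M: "q * ((1 + 1 / q) / 2) \<le> q * s" using sq q1 by simp
        have E: "q * ((1 + 1 / q) / 2) = (q + 1) / 2" using q1 by (simp add: field_simps)
        have "(q + 1) / 2 \<le> q * s" using M unfolding E .
        then show False using q1 Q1 by argo
      qed
    qed
  qed
  have rho: "W \<ge> 1 + ln \<kappa>"
  proof -
    have "ln \<kappa> = - ln a - ln W" using kap a0 W1 by (simp add: ln_div ln_mult)
    then show ?thesis using W1 by (simp add: W_def)
  qed
  show ?thesis
    apply (rule exI[of _ W], rule exI[of _ v])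
    using rho mono conc diff nonneg v1 rev
      has_field_derivative_at_within[OF deriv0, of "{0..1}"] kap
    by auto
qed

end
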